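(* Let $R$ be an integral domain and $\mathfrak p$ a prime ideal of $R$ such that $\widehat{R}_{\mathfrak p}$ is an integral domain containing $R$ (via the canonical map). Let $f\in R[[X]]$ be $\widehat{\mathfrak p}$-distinguished in $\widehat{R}_{\mathfrak p}[[X]]$. Suppose that $\widehat{R}_{\mathfrak p}/f_0\widehat{R}_{\mathfrak p}\cong R/f_0R$ as $R$-algebras and that every divisor of $f_0$ in $\widehat{R}_{\mathfrak p}$ is associate in $\widehat{R}_{\mathfrak p}$ to a divisor of $f_0$ in $R$. Then $f$ is irreducible in $R[[X]]$ if and only if the Weierstrass polynomial $P_f$ associated to $f$ in $\widehat{R}_{\mathfrak p}[X]$ is irreducible in $\widehat{R}_{\mathfrak p}[X]$. More precisely: (1) if $f=gh$ with nonunits $g,h\in R[[X]]$, then $g$ and $h$ are $\widehat{\mathfrak p}$-distinguished in $\widehat{R}_{\mathfrak p}[[X]]$, $P_f=P_gP_h$, and $P_g,P_h$ are nonunits in $\widehat{R}_{\mathfrak p}[X]$; (2) if $P_f=GH$ with nonunits $G,H\in\widehat{R}_{\mathfrak p}[X]$, then $f=gh$ for some nonunits $g,h\in R[[X]]$ with $G=uP_g$ and $H=u^{-1}P_h$ for a unique unit $u\in\widehat{R}_{\mathfrak p}$.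
   Context: $\widehat{R}_{\mathfrak p}=\varprojlim R/\mathfrak p^n$ is the $\mathfrak p$-adic completion and $\widehat{\mathfrak p}$ the closure of the image of $\mathfrak p$ in it; $\widehat{R}_{\mathfrak p}$ is complete with respect to the filtration by closures of powers of $\mathfrak p$. A series $g\in S[[X]]$ is $\mathfrak b$-distinguished of order $n$ if its coefficients $g_i$ lie in $\mathfrak b$ for $i<n$ and $g_n$ is a unit mod $\mathfrak b$; for a $\widehat{\mathfrak p}$-distinguished $g$, $P_g$ is the unique monic polynomial in $\widehat{R}_{\mathfrak p}[X]$ with non-leading coefficients in $\widehat{\mathfrak p}$ such that $g=UP_g$ for some unit $U\in\widehat{R}_{\mathfrak p}[[X]]$. $f_0$ is the constant term of $f$. *)

theory Defs
  imports "HOL-Computational_Algebra.Computational_Algebra"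
    "HOL-Computational_Algebra.Polynomial_FPS"
begin

definition is_ideal :: "'a::comm_ring_1 set \<Rightarrow> bool" where
  "is_ideal I \<longleftrightarrow> 0 \<in> I \<and> (\<forall>x\<in>I. \<forall>y\<in>I. x + y \<in> I) \<and> (\<forall>x\<in>I. - x \<in> I)
                 \<and> (\<forall>x\<in>I. \<forall>r. r * x \<in> I)"

definition is_prime_ideal :: "'a::comm_ring_1 set \<Rightarrow> bool" where
  "is_prime_ideal P \<longleftrightarrow> is_ideal P \<and> P \<noteq> UNIV \<and> (\<forall>a b. a * b \<in> P \<longrightarrow> a \<in> P \<or> b \<in> P)"

definition ideal_gen :: "'a::comm_ring_1 set \<Rightarrow> 'a set" where
  "ideal_gen S = \<Inter>{I. is_ideal I \<and> S \<subseteq> I}"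

fun ideal_pow :: "'a::comm_ring_1 set \<Rightarrow> nat \<Rightarrow> 'a set" where
  "ideal_pow P 0 = UNIV"
| "ideal_pow P (Suc n) = ideal_gen {a * b | a b. a \<in> P \<and> b \<in> ideal_pow P n}"

definition coset :: "'a::comm_ring_1 set \<Rightarrow> 'a \<Rightarrow> 'a set" where
  "coset I a = {a + x | x. x \<in> I}"

text \<open>Elements of lim R/p^n: compatible families of classes x n in R/p^n.
  Compatibility (x (n+1) maps to x n) is exactly x (Suc n) \<subseteq> x n.\<close>
definition invlim :: "'a::comm_ring_1 set \<Rightarrow> (nat \<Rightarrow> 'a set) set" where
  "invlim P = {x. (\<forall>n. \<exists>a. x n = coset (ideal_pow P n) a) \<and> (\<forall>n. x (Suc n) \<subseteq> x n)}"

text \<open>\<open>is_padic_completion P \<iota> \<phi>\<close>: the ring 'b together with the map \<iota> : R \<rightarrow> 'b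
  is (a copy of) the P-adic completion lim R/P^n with its canonical map;
  \<phi> is a ring isomorphism from 'b onto the inverse limit (with componentwise
  ring operations) such that \<phi> (\<iota> a) is the family of classes of a.\<close>
definition is_padic_completion ::
  "'a::comm_ring_1 set \<Rightarrow> ('a \<Rightarrow> 'b::comm_ring_1) \<Rightarrow> ('b \<Rightarrow> nat \<Rightarrow> 'a set) \<Rightarrow> bool" where
  "is_padic_completion P \<iota> \<phi> \<longleftrightarrow>
     bij_betw \<phi> UNIV (invlim P) \<and>
     (\<forall>x y n a b. \<phi> x n = coset (ideal_pow P n) a \<longrightarrow> \<phi> y n = coset (ideal_pow P n) b \<longrightarrow>
          \<phi> (x + y) n = coset (ideal_pow P n) (a + b) \<and>
          \<phi> (x * y) n = coset (ideal_pow P n) (a * b)) \<and>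
     (\<forall>a n. \<phi> (\<iota> a) n = coset (ideal_pow P n) a)"

text \<open>Closure of a subset A of the completion in the inverse-limit (p-adic)
  topology, whose basic neighbourhoods of x are {y. \<phi> y n = \<phi> x n}.\<close>
definition padic_closure :: "('b \<Rightarrow> nat \<Rightarrow> 'a set) \<Rightarrow> 'b set \<Rightarrow> 'b set" where
  "padic_closure \<phi> A = {x. \<forall>n. \<exists>y\<in>A. \<phi> y n = \<phi> x n}"

definition fps_map :: "('a::zero \<Rightarrow> 'b::zero) \<Rightarrow> 'a fps \<Rightarrow> 'b fps" where
  "fps_map \<iota> f = Abs_fps (\<lambda>n. \<iota> (fps_nth f n))"

definition distinguished_of_order :: "'b::comm_ring_1 set \<Rightarrow> nat \<Rightarrow> 'b fps \<Rightarrow> bool" where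
  "distinguished_of_order B n g \<longleftrightarrow>
     (\<forall>i<n. fps_nth g i \<in> B) \<and> (\<exists>c. fps_nth g n * c - 1 \<in> B)"

definition distinguished :: "'b::comm_ring_1 set \<Rightarrow> 'b fps \<Rightarrow> bool" where
  "distinguished B g \<longleftrightarrow> (\<exists>n. distinguished_of_order B n g)"

definition weierstrass_poly :: "'b::comm_ring_1 set \<Rightarrow> 'b fps \<Rightarrow> 'b poly" where
  "weierstrass_poly B g = (THE P. lead_coeff P = 1 \<and> (\<forall>i<degree P. coeff P i \<in> B) \<and>
                                   (\<exists>U. U dvd 1 \<and> g = U * fps_of_poly P))"

definition principal :: "'a::comm_ring_1 \<Rightarrow> 'a set" where
  "principal a = {a * r | r. True}"

text \<open>\<psi> maps classes of R/f0 R to classes of S/\<iota>(f0) S; it is a bijection,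
  additive, multiplicative, and compatible with the structure maps R \<rightarrow> R/f0R and
  R \<rightarrow> S/\<iota>(f0)S (hence unital): an isomorphism of R-algebras.\<close>
definition quot_R_alg_iso ::
  "('a::comm_ring_1 \<Rightarrow> 'b::comm_ring_1) \<Rightarrow> 'a \<Rightarrow> ('a set \<Rightarrow> 'b set) \<Rightarrow> bool" where
  "quot_R_alg_iso \<iota> f0 \<psi> \<longleftrightarrow>
     bij_betw \<psi> (range (coset (principal f0))) (range (coset (principal (\<iota> f0)))) \<and>
     (\<forall>a b x y. \<psi> (coset (principal f0) a) = coset (principal (\<iota> f0)) x \<longrightarrow>
                \<psi> (coset (principal f0) b) = coset (principal (\<iota> f0)) y \<longrightarrow>
                \<psi> (coset (principal f0) (a + b)) = coset (principal (\<iota> f0)) (x + y) \<and>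
                \<psi> (coset (principal f0) (a * b)) = coset (principal (\<iota> f0)) (x * y)) \<and>
     (\<forall>r. \<psi> (coset (principal f0) r) = coset (principal (\<iota> f0)) (\<iota> r))"

end

theory Submission
  imports Defs
begin



lemma ideal_UNIV: "is_ideal (UNIV::'a::comm_ring_1 set)"
  by (simp add: is_ideal_def)

lemma ideal_gen_ideal: "is_ideal (ideal_gen S)"
  unfolding ideal_gen_def is_ideal_def by auto

lemma ideal_gen_sub: "S \<subseteq> ideal_gen S"
  unfolding ideal_gen_def by auto

lemma ideal_gen_least: "is_ideal I \<Longrightarrow> S \<subseteq> I \<Longrightarrow> ideal_gen S \<subseteq> I"
  unfolding ideal_gen_def by auto

lemma ideal_pow_ideal: "is_ideal (ideal_pow P n)"
  by (cases n) (auto simp: ideal_UNIV ideal_gen_ideal)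

lemma ideal_diff: "is_ideal I \<Longrightarrow> a \<in> I \<Longrightarrow> b \<in> I \<Longrightarrow> a - b \<in> I"
  unfolding is_ideal_def by (metis diff_conv_add_uminus)

lemma ideal_mult: "is_ideal I \<Longrightarrow> a \<in> I \<Longrightarrow> r * a \<in> I"
  unfolding is_ideal_def by blast

lemma ideal_mult2: "is_ideal I \<Longrightarrow> a \<in> I \<Longrightarrow> a * r \<in> I"
  unfolding is_ideal_def by (metis mult.commute)

lemma ideal_add: "is_ideal I \<Longrightarrow> a \<in> I \<Longrightarrow> b \<in> I \<Longrightarrow> a + b \<in> I"
  unfolding is_ideal_def by blast

lemma ideal_zero: "is_ideal I \<Longrightarrow> 0 \<in> I"
  unfolding is_ideal_def by blast

lemma ideal_neg: "is_ideal I \<Longrightarrow> a \<in> I \<Longrightarrow> - a \<in> I"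
  unfolding is_ideal_def by blast

lemma ideal_sum: "is_ideal I \<Longrightarrow> (\<And>x. x \<in> A \<Longrightarrow> f x \<in> I) \<Longrightarrow> sum f A \<in> I"
  by (induct A rule: infinite_finite_induct) (auto simp: ideal_zero ideal_add)

lemma coset_eq: "is_ideal I \<Longrightarrow> coset I a = coset I b \<longleftrightarrow> a - b \<in> I"
proof
  assume I: "is_ideal I" and e: "coset I a = coset I b"
  have "a \<in> coset I a" unfolding coset_def using ideal_zero[OF I] by force
  then obtain x where "x \<in> I" "a = b + x" using e unfolding coset_def by auto
  thus "a - b \<in> I" by simp
next
  assume I: "is_ideal I" and d: "a - b \<in> I"
  show "coset I a = coset I b"
  proof (auto simp: coset_def)
    fix x assume "x \<in> I"
    thus "\<exists>y. a + x = b + y \<and> y \<in> I"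
      by (intro exI[of _ "(a - b) + x"]) (auto intro: ideal_add[OF I] d)
  next
    fix x assume "x \<in> I"
    thus "\<exists>y. b + x = a + y \<and> y \<in> I"
      by (intro exI[of _ "x - (a - b)"]) (auto intro: ideal_diff[OF I] d)
  qed
qed

lemma in_coset: "is_ideal I \<Longrightarrow> a \<in> coset I a"
  unfolding coset_def using ideal_zero by force

lemma coset_mem: "is_ideal I \<Longrightarrow> x \<in> coset I a \<longleftrightarrow> x - a \<in> I"
  unfolding coset_def by (auto intro!: exI[of _ "x - a"])

lemma coset_zero: "is_ideal I \<Longrightarrow> coset I 0 = I"
  unfolding coset_def by auto

lemma coset_inter: "is_ideal I \<Longrightarrow> x \<in> coset I a \<Longrightarrow> x \<in> coset I b \<Longrightarrow> coset I a = coset I b"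
proof -
  assume I: "is_ideal I" and x: "x \<in> coset I a" "x \<in> coset I b"
  have "(x - b) - (x - a) \<in> I" using ideal_diff[OF I, of "x-b" "x-a"] x I by (simp add: coset_mem)
  moreover have "(x - b) - (x - a) = a - b" by simp
  ultimately show ?thesis using I by (simp add: coset_eq)
qed

lemma ideal_pow_Suc_sub: "ideal_pow P (Suc n) \<subseteq> ideal_pow P n"
proof -
  have "ideal_gen {a * b |a b. a \<in> P \<and> b \<in> ideal_pow P n} \<subseteq> ideal_pow P n"
    by (rule ideal_gen_least[OF ideal_pow_ideal]) (auto intro: ideal_mult[OF ideal_pow_ideal])
  thus ?thesis by simp
qed

lemma ideal_pow_mono: "m \<le> n \<Longrightarrow> ideal_pow P n \<subseteq> ideal_pow P m"
  by (induct n rule: dec_induct) (use ideal_pow_Suc_sub in blast)+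

lemma ideal_pow_mult: "a \<in> P \<Longrightarrow> b \<in> ideal_pow P n \<Longrightarrow> a * b \<in> ideal_pow P (Suc n)"
  using ideal_gen_sub by fastforce

lemma ideal_pow_1: assumes I: "is_ideal P" shows "ideal_pow P 1 = P"
proof
  have "ideal_gen {a * b |a b. a \<in> P \<and> b \<in> ideal_pow P 0} \<subseteq> P"
    by (rule ideal_gen_least[OF I]) (auto intro: ideal_mult2[OF I])
  thus "ideal_pow P 1 \<subseteq> P" by simp
  show "P \<subseteq> ideal_pow P 1"
  proof
    fix x assume "x \<in> P"
    from ideal_pow_mult[OF this, of 1 0] show "x \<in> ideal_pow P 1" by simp
  qed
qed

declare ideal_pow.simps(2)[simp del]

lemma ideal_pow_Suc0: "is_ideal P \<Longrightarrow> ideal_pow P (Suc 0) = P"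
  using ideal_pow_1 by simp

lemma coset_UNIV [simp]: "coset UNIV a = UNIV"
  unfolding coset_def by (auto intro!: exI[of _ "x - a" for x])




locale cset =
  fixes P :: "'a::idom set" and \<iota> :: "'a \<Rightarrow> 'b::idom" and \<phi> :: "'b \<Rightarrow> nat \<Rightarrow> 'a set"
  assumes prime: "is_prime_ideal P" and compl: "is_padic_completion P \<iota> \<phi>"
begin

lemma Pideal: "is_ideal P" using prime by (simp add: is_prime_ideal_def)

lemma phi_inv: "\<phi> x \<in> invlim P"
  using compl unfolding is_padic_completion_def by (meson UNIV_I bij_betw_apply)

lemma phi_coset: "\<exists>a. \<phi> x n = coset (ideal_pow P n) a"
  using phi_inv[of x] unfolding invlim_def by blast

lemma phi_sub: "\<phi> x (Suc n) \<subseteq> \<phi> x n"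
  using phi_inv[of x] unfolding invlim_def by blast

lemma phi_inj: "\<phi> x = \<phi> y \<Longrightarrow> x = y"
  using compl unfolding is_padic_completion_def bij_betw_def inj_on_def by blast

lemma phi_surj: "y \<in> invlim P \<Longrightarrow> \<exists>x. \<phi> x = y"
  using compl unfolding is_padic_completion_def bij_betw_def by (metis imageE)

lemma phi_iota: "\<phi> (\<iota> a) n = coset (ideal_pow P n) a"
  using compl unfolding is_padic_completion_def by blast

lemma phi_ops: "\<phi> x n = coset (ideal_pow P n) a \<Longrightarrow> \<phi> y n = coset (ideal_pow P n) b \<Longrightarrow>
          \<phi> (x + y) n = coset (ideal_pow P n) (a + b) \<and> \<phi> (x * y) n = coset (ideal_pow P n) (a * b)"
  using compl unfolding is_padic_completion_def by blast

lemma phi_add: "\<phi> x n = \<phi> x' n \<Longrightarrow> \<phi> y n = \<phi> y' n \<Longrightarrow> \<phi> (x+y) n = \<phi> (x'+y') n"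
proof -
  assume e: "\<phi> x n = \<phi> x' n" "\<phi> y n = \<phi> y' n"
  obtain a where a: "\<phi> x n = coset (ideal_pow P n) a" using phi_coset by blast
  obtain b where b: "\<phi> y n = coset (ideal_pow P n) b" using phi_coset by blast
  have a': "\<phi> x' n = coset (ideal_pow P n) a" using a e by simp
  have b': "\<phi> y' n = coset (ideal_pow P n) b" using b e by simp
  show ?thesis using phi_ops[OF a b] phi_ops[OF a' b'] by simp
qed

lemma phi_mult: "\<phi> x n = \<phi> x' n \<Longrightarrow> \<phi> y n = \<phi> y' n \<Longrightarrow> \<phi> (x*y) n = \<phi> (x'*y') n"
proof -
  assume e: "\<phi> x n = \<phi> x' n" "\<phi> y n = \<phi> y' n"
  obtain a where a: "\<phi> x n = coset (ideal_pow P n) a" using phi_coset by blast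
  obtain b where b: "\<phi> y n = coset (ideal_pow P n) b" using phi_coset by blast
  have a': "\<phi> x' n = coset (ideal_pow P n) a" using a e by simp
  have b': "\<phi> y' n = coset (ideal_pow P n) b" using b e by simp
  show ?thesis using phi_ops[OF a b] phi_ops[OF a' b'] by simp
qed

lemma phi_neg: "\<phi> x n = \<phi> x' n \<Longrightarrow> \<phi> (-x) n = \<phi> (-x') n"
proof -
  assume e: "\<phi> x n = \<phi> x' n"
  have "\<phi> (-x' ) n = \<phi> ((-x) + (x + (-x'))) n" by simp
  also have "\<dots> = \<phi> ((-x) + (x' + (-x'))) n"
    by (intro phi_add refl e)
  also have "\<dots> = \<phi> (-x) n" by simp
  finally show ?thesis by simp
qed

definition K :: "nat \<Rightarrow> 'b set" where "K k = {x. \<phi> x k = \<phi> 0 k}"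

lemma K_iff: "\<phi> x k = \<phi> y k \<longleftrightarrow> x - y \<in> K k"
proof
  assume "\<phi> x k = \<phi> y k"
  hence "\<phi> (x + - y) k = \<phi> (y + - y) k" by (intro phi_add refl)
  thus "x - y \<in> K k" by (simp add: K_def)
next
  assume "x - y \<in> K k"
  hence "\<phi> ((x - y) + y) k = \<phi> (0 + y) k" by (intro phi_add refl) (simp add: K_def)
  thus "\<phi> x k = \<phi> y k" by simp
qed

lemma K_ideal: "is_ideal (K k)"
  unfolding is_ideal_def
proof (intro conjI ballI allI)
  show "0 \<in> K k" by (simp add: K_def)
  fix x assume x: "x \<in> K k"
  { fix y assume "y \<in> K k"
    with x have "\<phi> (x + y) k = \<phi> (0 + 0) k" by (intro phi_add) (auto simp: K_def)
    thus "x + y \<in> K k" by (simp add: K_def) }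
  have "\<phi> (-x) k = \<phi> (-0) k" using x by (intro phi_neg) (auto simp: K_def)
  thus "- x \<in> K k" by (simp add: K_def)
  fix r
  have "\<phi> (r * x) k = \<phi> (r * 0) k" using x by (intro phi_mult) (auto simp: K_def)
  thus "r * x \<in> K k" by (simp add: K_def)
qed

lemma K_0 [simp]: "K 0 = UNIV"
proof -
  have "\<phi> x 0 = UNIV" for x
    using phi_coset[of x 0] by auto
  thus ?thesis by (auto simp: K_def)
qed

lemma phi_mono: "n \<le> m \<Longrightarrow> \<phi> x m \<subseteq> \<phi> x n"
  by (induct m rule: dec_induct) (use phi_sub in blast)+

lemma K_Suc: "K (Suc k) \<subseteq> K k"
proof
  fix x assume "x \<in> K (Suc k)"
  hence e: "\<phi> x (Suc k) = \<phi> 0 (Suc k)" by (simp add: K_def)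
  obtain a where a: "\<phi> x (Suc k) = coset (ideal_pow P (Suc k)) a" using phi_coset by metis
  have ain: "a \<in> \<phi> x (Suc k)" using a in_coset[OF ideal_pow_ideal] by metis
  obtain b c where b: "\<phi> x k = coset (ideal_pow P k) b" and c: "\<phi> 0 k = coset (ideal_pow P k) c"
    using phi_coset by metis
  have "a \<in> \<phi> x k" using ain phi_sub by blast
  moreover have "a \<in> \<phi> 0 k" using ain e phi_sub by blast
  ultimately have "\<phi> x k = \<phi> 0 k" using b c coset_inter[OF ideal_pow_ideal] by metis
  thus "x \<in> K k" by (simp add: K_def)
qed

lemma K_mono: "k \<le> m \<Longrightarrow> K m \<subseteq> K k"
  by (induct m rule: dec_induct) (use K_Suc in blast)+

lemma iota_add: "\<iota> (a + b) = \<iota> a + \<iota> b"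
proof (rule phi_inj, rule ext)
  fix n show "\<phi> (\<iota> (a + b)) n = \<phi> (\<iota> a + \<iota> b) n"
    using phi_ops[OF phi_iota phi_iota] phi_iota by metis
qed

lemma iota_mult: "\<iota> (a * b) = \<iota> a * \<iota> b"
proof (rule phi_inj, rule ext)
  fix n show "\<phi> (\<iota> (a * b)) n = \<phi> (\<iota> a * \<iota> b) n"
    using phi_ops[OF phi_iota phi_iota] phi_iota by metis
qed

lemma iota_0 [simp]: "\<iota> 0 = 0"
  using iota_add[of 0 0] by (metis add_cancel_right_right)

lemma iota_neg: "\<iota> (- a) = - \<iota> a"
  using iota_add[of a "-a"] minus_unique[of "\<iota> a" "\<iota> (-a)"] by simp

lemma iota_diff: "\<iota> (a - b) = \<iota> a - \<iota> b"
  using iota_add[of a "-b"] iota_neg by simp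

lemma iota_1 [simp]: "\<iota> 1 = 1"
proof -
  have "\<phi> (\<iota> 1 * 1) = \<phi> 1"
  proof
    fix n
    obtain a where a: "\<phi> 1 n = coset (ideal_pow P n) a" using phi_coset by metis
    show "\<phi> (\<iota> 1 * 1) n = \<phi> 1 n" using phi_ops[OF phi_iota a] a by simp
  qed
  thus ?thesis using phi_inj by fastforce
qed

lemma iota_sum: "\<iota> (sum g A) = (\<Sum>x\<in>A. \<iota> (g x))"
  using sum_comp_morphism[of \<iota> g A] iota_add by (simp add: o_def)

lemma phi_0: "\<phi> 0 n = ideal_pow P n"
  using phi_iota[of 0 n] by (simp add: coset_zero ideal_pow_ideal)

lemma K_mult: assumes x: "x \<in> K 1" and y: "y \<in> K k" shows "x * y \<in> K (Suc k)"
proof -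
  obtain a where a: "\<phi> x (Suc k) = coset (ideal_pow P (Suc k)) a" using phi_coset by metis
  obtain b where b: "\<phi> y (Suc k) = coset (ideal_pow P (Suc k)) b" using phi_coset by metis
  have "a \<in> \<phi> x (Suc k)" using a in_coset[OF ideal_pow_ideal] by metis
  hence "a \<in> \<phi> x 1" using phi_mono[of 1 "Suc k" x] by auto
  hence aP: "a \<in> P" using x by (simp add: K_def phi_0 ideal_pow_Suc0[OF Pideal])
  have "b \<in> \<phi> y k" using b in_coset[OF ideal_pow_ideal] phi_sub by blast
  hence bP: "b \<in> ideal_pow P k" using y by (simp add: K_def phi_0)
  have "\<phi> (x * y) (Suc k) = coset (ideal_pow P (Suc k)) (a * b)" using phi_ops[OF a b] by blast
  also have "\<dots> = coset (ideal_pow P (Suc k)) 0"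
    using ideal_pow_mult[OF aP bP] by (simp add: coset_eq ideal_pow_ideal)
  also have "\<dots> = \<phi> 0 (Suc k)" by (simp add: coset_zero ideal_pow_ideal phi_0)
  finally show ?thesis by (simp add: K_def)
qed

lemma K_sep: "(\<And>k. x \<in> K k) \<Longrightarrow> x = 0"
  by (rule phi_inj) (auto simp: K_def)

lemma iota_K1: "\<iota> a \<in> K 1 \<longleftrightarrow> a \<in> P"
proof -
  have "\<iota> a \<in> K 1 \<longleftrightarrow> coset P a = coset P 0"
    by (simp add: K_def phi_iota phi_0 ideal_pow_Suc0 Pideal coset_zero)
  thus ?thesis by (simp add: coset_eq Pideal)
qed

lemma one_notin: "(1::'b) \<notin> K 1"
proof
  assume "(1::'b) \<in> K 1"
  hence "(1::'a) \<in> P" using iota_K1[of 1] by simp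
  hence "r \<in> P" for r using ideal_mult[OF Pideal, of 1 r] by simp
  thus False using prime unfolding is_prime_ideal_def by auto
qed

lemma K1_prime: assumes "x * y \<in> K 1" shows "x \<in> K 1 \<or> y \<in> K 1"
proof -
  obtain a where a: "\<phi> x 1 = coset (ideal_pow P 1) a" using phi_coset by metis
  obtain b where b: "\<phi> y 1 = coset (ideal_pow P 1) b" using phi_coset by metis
  have "\<phi> (x*y) 1 = \<phi> (\<iota> (a*b)) 1" using phi_ops[OF a b] phi_iota by metis
  hence "a * b \<in> P" using assms iota_K1 K_iff[of "x*y" 1 "\<iota> (a*b)"]
    by (metis K_iff diff_0_right K_def mem_Collect_eq)
  hence "a \<in> P \<or> b \<in> P" using prime unfolding is_prime_ideal_def by blast
  moreover have "\<phi> x 1 = \<phi> (\<iota> a) 1" "\<phi> y 1 = \<phi> (\<iota> b) 1" using a b phi_iota by metis+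
  ultimately show ?thesis using iota_K1 by (metis K_def mem_Collect_eq)
qed

lemma closure_K1: "padic_closure \<phi> (\<iota> ` P) = K 1"
proof safe
  fix x assume "x \<in> padic_closure \<phi> (\<iota> ` P)"
  then obtain y where "y \<in> \<iota> ` P" "\<phi> y 1 = \<phi> x 1" unfolding padic_closure_def by blast
  thus "x \<in> K 1" using iota_K1 by (auto simp: K_def)
next
  fix x assume x: "x \<in> K 1"
  show "x \<in> padic_closure \<phi> (\<iota> ` P)" unfolding padic_closure_def
  proof (safe)
    fix n
    obtain a where a: "\<phi> x n = coset (ideal_pow P n) a" using phi_coset by metis
    show "\<exists>y\<in>\<iota> ` P. \<phi> y n = \<phi> x n"
    proof (cases n)
      case 0 thus ?thesis using ideal_zero[OF Pideal] phi_coset[of _ 0] by (auto intro!: bexI[of _ "\<iota> 0"])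
    next
      case (Suc m)
      have "a \<in> \<phi> x n" using a in_coset[OF ideal_pow_ideal] by metis
      hence "a \<in> \<phi> x 1" using phi_mono[of 1 n x] Suc by auto
      hence "a \<in> P" using x by (simp add: K_def phi_0 ideal_pow_Suc0[OF Pideal])
      thus ?thesis using a phi_iota by auto
    qed
  qed
qed

lemma limit: assumes c: "\<And>k. x (Suc k) - x k \<in> K k" shows "\<exists>L. \<forall>k. L - x k \<in> K k"
proof -
  have "\<phi> (x (Suc n)) n = \<phi> (x n) n" for n using c K_iff by blast
  define y where "y n = \<phi> (x n) n" for n
  have "y \<in> invlim P" unfolding invlim_def y_def
  proof (safe)
    fix n show "\<exists>a. \<phi> (x n) n = coset (ideal_pow P n) a" by (rule phi_coset)
  next
    fix n z assume "z \<in> \<phi> (x (Suc n)) (Suc n)"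
    hence "z \<in> \<phi> (x (Suc n)) n" using phi_sub by blast
    thus "z \<in> \<phi> (x n) n" using c K_iff by blast
  qed
  then obtain L where "\<phi> L = y" using phi_surj by blast
  thus ?thesis using K_iff y_def by metis
qed

lemma K_pow: "b \<in> K 1 \<Longrightarrow> b ^ k \<in> K k"
  by (induct k) (auto intro: K_mult)

lemma unit_1B: assumes b: "b \<in> K 1" shows "(1 + b) dvd 1"
proof -
  define s where "s k = (\<Sum>i<k. (-b)^i)" for k
  have "s (Suc k) - s k \<in> K k" for k using K_pow[of "-b" k] b ideal_neg[OF K_ideal] by (simp add: s_def)
  then obtain L where L: "\<And>k. L - s k \<in> K k" using limit by blast
  have "(1 + b) * L - 1 \<in> K k" for k
  proof -
    have e: "(1 + b) * s k = 1 - (-b)^k" for k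
    proof (induct k)
      case 0 thus ?case by (simp add: s_def)
    next
      case (Suc k)
      have "(1 + b) * s (Suc k) = (1 + b) * s k + (1 + b) * (-b)^k" by (simp add: s_def algebra_simps)
      also have "\<dots> = 1 - (-b)^Suc k" using Suc by (simp add: algebra_simps)
      finally show ?case .
    qed
    have "(1 + b) * (L - s k) - (-b)^k = (1 + b) * L - (1 + b) * s k - (-b)^k"
      by (simp add: right_diff_distrib)
    hence "(1 + b) * L - 1 = (1 + b) * (L - s k) - (-b)^k" by (simp add: e)
    moreover have "(1 + b) * (L - s k) \<in> K k" by (rule ideal_mult[OF K_ideal L])
    moreover have "(-b)^k \<in> K k" using K_pow[of "-b" k] b ideal_neg[OF K_ideal] by simp
    ultimately show ?thesis by (simp add: ideal_diff[OF K_ideal])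
  qed
  hence "(1 + b) * L - 1 = 0" by (intro K_sep) 
  hence "(1 + b) * L = 1" by simp
  thus ?thesis by (metis dvdI)
qed

lemma unitB: assumes "x * c - 1 \<in> K 1" shows "x dvd 1"
proof -
  have "(1 + (x * c - 1)) dvd 1" by (rule unit_1B[OF assms])
  hence "x * c dvd 1" by simp
  thus ?thesis using dvd_mult_left by blast
qed

end



lemma fps_unit_iff: "(F :: 'a::comm_ring_1 fps) dvd 1 \<longleftrightarrow> F $ 0 dvd 1"
proof
  assume "F dvd 1"
  then obtain G where "1 = F * G" by (rule dvdE)
  hence "1 = (F * G) $ 0" by (metis fps_one_nth)
  hence "1 = F $ 0 * G $ 0" by simp
  thus "F $ 0 dvd 1" by (rule dvdI)
next
  assume "F $ 0 dvd 1"
  then obtain y where "1 = F $ 0 * y" by (rule dvdE)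
  hence "F * fps_right_inverse F y = 1" by (intro fps_right_inverse) simp
  thus "F dvd 1" by (metis dvdI)
qed

lemma fps_shift_diff': "fps_shift d (F - G) = fps_shift d F - fps_shift d (G :: 'a::ab_group_add fps)"
  by (rule fps_ext) simp

lemma sum_single: assumes I: "is_ideal I" and "finite A" "a \<in> A" "\<And>i. i \<in> A \<Longrightarrow> i \<noteq> a \<Longrightarrow> t i \<in> I"
  shows "sum t A - t a \<in> I"
proof -
  have "sum t A = t a + sum t (A - {a})" using assms by (simp add: sum.remove)
  moreover have "sum t (A - {a}) \<in> I" using assms by (intro ideal_sum[OF I]) auto
  ultimately show ?thesis by simp
qed

declare One_nat_def[simp del]

context cset begin

definition fK :: "nat \<Rightarrow> 'b fps set" where "fK k = {F. \<forall>n. F $ n \<in> K k}"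

lemma fK_I: "(\<And>n. F $ n \<in> K k) \<Longrightarrow> F \<in> fK k" by (simp add: fK_def)
lemma fK_D: "F \<in> fK k \<Longrightarrow> F $ n \<in> K k" by (simp add: fK_def)

lemma fK_add: "F \<in> fK k \<Longrightarrow> G \<in> fK k \<Longrightarrow> F + G \<in> fK k"
  by (auto simp: fK_def intro: ideal_add[OF K_ideal])
lemma fK_diff: "F \<in> fK k \<Longrightarrow> G \<in> fK k \<Longrightarrow> F - G \<in> fK k"
  by (auto simp: fK_def intro: ideal_diff[OF K_ideal])
lemma fK_neg: "F \<in> fK k \<Longrightarrow> - F \<in> fK k"
  by (auto simp: fK_def intro: ideal_neg[OF K_ideal])
lemma fK_zero: "0 \<in> fK k"
  by (auto simp: fK_def intro: ideal_zero[OF K_ideal])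
lemma fK_0 [simp]: "fK 0 = UNIV" by (auto simp: fK_def)
lemma fK_mono: "k \<le> m \<Longrightarrow> fK m \<subseteq> fK k" using K_mono by (auto simp: fK_def)
lemma fK_shift: "F \<in> fK k \<Longrightarrow> fps_shift d F \<in> fK k" by (auto simp: fK_def)

lemma fK_mult_left: assumes "F \<in> fK k" shows "G * F \<in> fK k"
proof (rule fK_I)
  fix n show "(G * F) $ n \<in> K k" unfolding fps_mult_nth
    by (intro ideal_sum[OF K_ideal] ideal_mult[OF K_ideal] fK_D[OF assms])
qed
lemma fK_mult_right: "F \<in> fK k \<Longrightarrow> F * G \<in> fK k"
  using fK_mult_left[of F k G] by (simp add: mult.commute)

lemma fK_mult_Suc: assumes "F \<in> fK k" "G \<in> fK 1" shows "F * G \<in> fK (Suc k)"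
proof (rule fK_I)
  fix n show "(F * G) $ n \<in> K (Suc k)" unfolding fps_mult_nth
  proof (intro ideal_sum[OF K_ideal])
  fix i
  have "G $ (n - i) * F $ i \<in> K (Suc k)" using assms by (intro K_mult) (auto simp: fK_def)
  thus "F $ i * G $ (n - i) \<in> K (Suc k)" by (simp add: mult.commute)
  qed
qed

lemma fsep: "(\<And>k. F \<in> fK k) \<Longrightarrow> F = 0"
  by (rule fps_ext) (auto intro: K_sep simp: fK_def)

lemma flimit: assumes c: "\<And>k. Fs (Suc k) - Fs k \<in> fK k" shows "\<exists>F. \<forall>k. F - Fs k \<in> fK k"
proof -
  have "\<forall>n. \<exists>L. \<forall>k. L - Fs k $ n \<in> K k"
  proof
    fix n
    have "(\<lambda>k. Fs k $ n) (Suc k) - (\<lambda>k. Fs k $ n) k \<in> K k" for k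
      using fK_D[OF c[of k], of n] by simp
    thus "\<exists>L. \<forall>k. L - Fs k $ n \<in> K k" using limit[of "\<lambda>k. Fs k $ n"] by blast
  qed
  then obtain L where L: "\<And>n k. L n - Fs k $ n \<in> K k" by metis
  show ?thesis by (intro exI[of _ "Abs_fps L"] allI fK_I) (simp add: L)
qed

lemma unit_notK1: "x dvd 1 \<Longrightarrow> x \<notin> K 1"
  using one_notin ideal_mult[OF K_ideal] by (metis dvdE mult.commute)

lemma weier_exist:
  assumes lo: "\<forall>i<d. g $ i \<in> K 1" and un: "g $ d * c - 1 \<in> K 1"
  shows "\<exists>U Q. U dvd 1 \<and> g = U * fps_of_poly Q \<and> lead_coeff Q = 1 \<and> degree Q = d \<and>
               (\<forall>i<d. coeff Q i \<in> K 1)"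
proof -
  define A where "A = Abs_fps (\<lambda>n. if n < d then g $ n else 0)"
  have A1: "A \<in> fK 1" unfolding A_def by (rule fK_I) (auto simp: lo ideal_zero[OF K_ideal])
  define E where "E = fps_shift d g"
  have "E $ 0 dvd 1" using unitB[OF un] by (simp add: E_def)
  then obtain W where EW: "E * W = 1" using fps_unit_iff by (metis dvdE)
  have gAE: "g = A + fps_X ^ d * E"
    by (rule fps_ext) (auto simp: A_def E_def fps_X_power_mult_nth)
  define T where "T V = W * (1 - fps_shift d (V * A))" for V
  have contr: "T V - T V' \<in> fK (Suc k)" if "V - V' \<in> fK k" for V V' k
  proof -
    have "T V - T V' = W * fps_shift d ((V' - V) * A)"
      by (simp add: T_def fps_shift_diff' algebra_simps)
    moreover have "(V' - V) * A \<in> fK (Suc k)"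
      using fK_neg[OF that] by (intro fK_mult_Suc A1) simp
    ultimately show ?thesis by (simp add: fK_mult_left fK_shift)
  qed
  define Vs where "Vs k = (T ^^ k) 0" for k
  have step: "Vs (Suc k) - Vs k \<in> fK k" for k
  proof (induct k)
    case 0 show ?case by simp
  next
    case (Suc k)
    thus ?case using contr[OF Suc] by (simp add: Vs_def)
  qed
  obtain V where V: "\<And>k. V - Vs k \<in> fK k" using flimit[OF step] by blast
  have "T V - V = 0"
  proof (rule fsep)
    fix k
    have "T V - T (Vs k) \<in> fK (Suc k)" by (rule contr[OF V])
    hence 1: "T V - T (Vs k) \<in> fK k" using fK_mono[of k "Suc k"] by auto
    have "V - Vs (Suc k) \<in> fK k" using V[of "Suc k"] fK_mono[of k "Suc k"] by auto
    hence 2: "Vs (Suc k) - V \<in> fK k" using fK_neg by fastforce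
    have "T V - V = (T V - T (Vs k)) + (Vs (Suc k) - V)" by (simp add: Vs_def)
    thus "T V - V \<in> fK k" using fK_add[OF 1 2] by simp
  qed
  hence TV: "T V = V" by simp
  have EV: "E * V = 1 - fps_shift d (V * A)"
  proof -
    have "E * V = E * T V" using TV by simp
    also have "\<dots> = (E * W) * (1 - fps_shift d (V * A))" by (simp add: T_def mult.assoc)
    finally show ?thesis using EW by simp
  qed
  have VA1: "V * A \<in> fK 1" by (rule fK_mult_left[OF A1])
  have Vg: "V * g = V * A + fps_X ^ d * (V * E)"
    by (simp add: gAE algebra_simps)
  have Vg_lo: "(V * g) $ n \<in> K 1" if "n < d" for n
    using that fK_D[OF VA1, of n] by (simp add: Vg fps_X_power_mult_nth)
  have Vg_hi: "(V * g) $ n = (if n = d then 1 else 0)" if "n \<ge> d" for n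
  proof -
    have "(V * g) $ n = (V * A) $ n + (E * V) $ (n - d)"
      using that by (simp add: Vg fps_X_power_mult_nth mult.commute[of V E])
    also have "\<dots> = (if n = d then 1 else 0)" using that by (simp add: EV)
    finally show ?thesis .
  qed
  define Q where "Q = monom 1 d + (\<Sum>i<d. monom ((V * g) $ i) i)"
  have cQ: "coeff Q n = (if n = d then 1 else 0) + (if n < d then (V * g) $ n else 0)" for n
    by (simp add: Q_def coeff_sum coeff_monom)
  have fQ: "fps_of_poly Q = V * g"
    by (rule fps_ext) (auto simp: cQ Vg_hi)
  have dQ: "degree Q = d"
  proof (rule antisym)
    show "degree Q \<le> d" by (rule degree_le) (auto simp: cQ)
    show "d \<le> degree Q" by (rule le_degree) (simp add: cQ)
  qed
  have "(E * V) $ 0 - 1 \<in> K 1"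
    using fK_D[OF VA1, of d] ideal_neg[OF K_ideal] by (simp add: EV)
  hence "V $ 0 * E $ 0 - 1 \<in> K 1" by (simp add: mult.commute)
  hence "V $ 0 dvd 1" by (rule unitB)
  hence "V dvd 1" using fps_unit_iff by blast
  then obtain U where VU: "1 = V * U" by (rule dvdE)
  have "U dvd 1" using VU by (metis dvdI mult.commute)
  moreover have "g = U * fps_of_poly Q" using VU fQ by (metis mult.assoc mult.commute mult_1)
  moreover have "\<forall>i<d. coeff Q i \<in> K 1" using cQ Vg_lo by simp
  ultimately show ?thesis using dQ cQ by (intro exI[of _ U] exI[of _ Q]) simp
qed

end



context cset begin

lemma least_prod:
  assumes F: "\<forall>m<i. F $ m \<in> K 1" and G: "\<forall>m<j. G $ m \<in> K 1"
  shows "\<forall>m<i+j. (F * G) $ m \<in> K 1" and "(F * G) $ (i + j) - F $ i * G $ j \<in> K 1"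
proof -
  show "\<forall>m<i+j. (F * G) $ m \<in> K 1"
  proof (intro allI impI)
    fix m assume m: "m < i + j"
    show "(F * G) $ m \<in> K 1" unfolding fps_mult_nth
    proof (rule ideal_sum[OF K_ideal])
      fix a assume am: "a \<in> {0..m}"
      show "F $ a * G $ (m - a) \<in> K 1"
      proof (cases "a < i")
        case True thus ?thesis using F by (simp add: ideal_mult2[OF K_ideal])
      next
        case False hence "m - a < j" using m am by auto
        thus ?thesis using G by (simp add: ideal_mult[OF K_ideal])
      qed
    qed
  qed
  show "(F * G) $ (i + j) - F $ i * G $ j \<in> K 1" unfolding fps_mult_nth
  proof -
    have "(\<Sum>a = 0..i + j. F $ a * G $ (i + j - a)) - F $ i * G $ (i + j - i) \<in> K 1"
    proof (rule sum_single[OF K_ideal])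
      fix a assume a: "a \<in> {0..i+j}" "a \<noteq> i"
      show "F $ a * G $ (i + j - a) \<in> K 1"
      proof (cases "a < i")
        case True thus ?thesis using F by (simp add: ideal_mult2[OF K_ideal])
      next
        case False hence "i + j - a < j" using a by auto
        thus ?thesis using G by (simp add: ideal_mult[OF K_ideal])
      qed
    qed auto
    thus "(\<Sum>a = 0..i + j. F $ a * G $ (i + j - a)) - F $ i * G $ j \<in> K 1" by simp
  qed
qed

lemma div_unique:
  assumes Q1: "lead_coeff Q = 1" and Qlo: "\<forall>i<degree Q. coeff Q i \<in> K 1"
    and Z: "\<And>n. n \<ge> degree Q \<Longrightarrow> (Z * fps_of_poly Q) $ n = 0"
  shows "Z = 0"
proof (rule fsep)
  fix k show "Z \<in> fK k"
  proof (induct k)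
    case 0 show ?case by simp
  next
    case (Suc k)
    show ?case
    proof (rule fK_I)
      fix m
      define d where "d = degree Q"
      define t where "t i = Z $ i * coeff Q (m + d - i)" for i
      have "sum t {0..m+d} - t m \<in> K (Suc k)"
      proof (rule sum_single[OF K_ideal])
        fix i assume i: "i \<in> {0..m+d}" "i \<noteq> m"
        show "t i \<in> K (Suc k)"
        proof (cases "i < m")
          case True
          hence "coeff Q (m + d - i) = 0" by (intro coeff_eq_0) (auto simp: d_def)
          thus ?thesis by (simp add: t_def ideal_zero[OF K_ideal])
        next
          case False hence "m + d - i < d" using i by auto
          hence "coeff Q (m + d - i) \<in> K 1" using Qlo by (simp add: d_def)
          hence "coeff Q (m + d - i) * Z $ i \<in> K (Suc k)" using fK_D[OF Suc] by (intro K_mult)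
          thus ?thesis by (simp add: t_def mult.commute)
        qed
      qed auto
      moreover have "sum t {0..m+d} = 0"
        using Z[of "m + d"] by (simp add: t_def fps_mult_nth d_def)
      moreover have "t m = Z $ m" using Q1 by (simp add: t_def d_def)
      ultimately have "- Z $ m \<in> K (Suc k)" by simp
      from ideal_neg[OF K_ideal this] show "Z $ m \<in> K (Suc k)" by simp
    qed
  qed
qed

definition wpoly :: "'b poly \<Rightarrow> bool" where
  "wpoly Q \<longleftrightarrow> lead_coeff Q = 1 \<and> (\<forall>i<degree Q. coeff Q i \<in> K 1)"

lemma wpoly_coeff: assumes "wpoly Q" shows "coeff Q n \<in> K 1 \<longleftrightarrow> n \<noteq> degree Q"
proof (cases "n < degree Q")
  case True thus ?thesis using assms by (auto simp: wpoly_def)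
next
  case False
  show ?thesis
  proof (cases "n = degree Q")
    case True thus ?thesis using assms one_notin by (auto simp: wpoly_def)
  next
    case False
    hence "coeff Q n = 0" using \<open>\<not> n < degree Q\<close> by (intro coeff_eq_0) auto
    thus ?thesis using False by (simp add: ideal_zero[OF K_ideal])
  qed
qed

lemma weier_unique:
  assumes U1: "U1 dvd 1" and U2: "U2 dvd 1" and e: "U1 * fps_of_poly Q1 = U2 * fps_of_poly Q2"
    and W1: "wpoly Q1" and W2: "wpoly Q2"
  shows "Q1 = Q2"
proof -
  obtain U1' where U1': "1 = U1 * U1'" using U1 by (rule dvdE)
  define W where "W = U1' * U2"
  have "U1' dvd 1" using dvd_triv_right[of U1' U1] U1' by simp
  hence WU: "W dvd 1" using U2 mult_dvd_mono[of U1' 1 U2 1] unfolding W_def by simp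
  have "fps_of_poly Q1 = (U1' * U1) * fps_of_poly Q1" using U1' by (simp add: mult.commute)
  also have "\<dots> = U1' * (U1 * fps_of_poly Q1)" by (simp add: mult.assoc)
  also have "\<dots> = W * fps_of_poly Q2" using e by (simp add: W_def mult.assoc)
  finally have fe: "fps_of_poly Q1 = W * fps_of_poly Q2" .
  define d where "d = degree Q2"
  have W0: "W $ 0 \<notin> K 1" using WU fps_unit_iff unit_notK1 by blast
  have "(W * fps_of_poly Q2) $ (0 + d) - W $ 0 * fps_of_poly Q2 $ d \<in> K 1"
    by (rule least_prod(2)) (use W2 wpoly_coeff in \<open>auto simp: d_def\<close>)
  hence "coeff Q1 d - W $ 0 \<in> K 1" using W2 by (simp add: d_def wpoly_def fe[symmetric])
  hence "coeff Q1 d \<notin> K 1" using W0 ideal_diff[OF K_ideal, of "coeff Q1 d" 1 "coeff Q1 d - W $ 0"]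
    by auto
  hence dd: "degree Q1 = d" using wpoly_coeff[OF W1] by auto
  have "W - 1 = 0"
  proof (rule div_unique)
    show "lead_coeff Q2 = 1" "\<forall>i<degree Q2. coeff Q2 i \<in> K 1" using W2 by (auto simp: wpoly_def)
    fix n assume n: "n \<ge> degree Q2"
    have "((W - 1) * fps_of_poly Q2) $ n = coeff Q1 n - coeff Q2 n"
      by (simp add: algebra_simps fe[symmetric])
    also have "\<dots> = 0"
    proof (cases "n = d")
      case True thus ?thesis using W1 W2 dd by (simp add: wpoly_def d_def)
    next
      case False thus ?thesis using n dd by (simp add: coeff_eq_0 d_def)
    qed
    finally show "((W - 1) * fps_of_poly Q2) $ n = 0" .
  qed
  hence "fps_of_poly Q1 = fps_of_poly Q2" using fe by simp
  thus ?thesis by (simp add: fps_of_poly_eq_iff)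
qed

lemma WP_eq:
  assumes "U dvd 1" "g = U * fps_of_poly Q" "wpoly Q"
  shows "weierstrass_poly (K 1) g = Q"
  unfolding weierstrass_poly_def
proof (rule the_equality)
  show "lead_coeff Q = 1 \<and> (\<forall>i<degree Q. coeff Q i \<in> K 1) \<and> (\<exists>U. U dvd 1 \<and> g = U * fps_of_poly Q)"
    using assms by (auto simp: wpoly_def)
  fix Q' assume "lead_coeff Q' = 1 \<and> (\<forall>i<degree Q'. coeff Q' i \<in> K 1) \<and> (\<exists>U. U dvd 1 \<and> g = U * fps_of_poly Q')"
  then obtain U' where "U' dvd 1" "g = U' * fps_of_poly Q'" "wpoly Q'" by (auto simp: wpoly_def)
  thus "Q' = Q" using weier_unique[of U' U Q' Q] assms by auto
qed

end



lemma principal_ideal: "is_ideal (principal (c::'a::comm_ring_1))"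
  unfolding is_ideal_def principal_def
proof (intro conjI ballI allI)
  show "0 \<in> {c * r |r. True}" by (auto intro!: exI[of _ 0])
  fix x assume "x \<in> {c * r |r. True}"
  then obtain a where a: "x = c * a" by auto
  { fix y assume "y \<in> {c * r |r. True}"
    then obtain b where b: "y = c * b" by auto
    show "x + y \<in> {c * r |r. True}" using a b by (auto intro!: exI[of _ "a + b"] simp: distrib_left) }
  show "- x \<in> {c * r |r. True}" using a by (auto intro!: exI[of _ "- a"])
  fix r show "r * x \<in> {c * r |r. True}" using a by (auto intro!: exI[of _ "r * a"] simp: ac_simps)
qed

lemma assoc_unit: assumes "(a::'a::idom) dvd b" "b dvd a" shows "\<exists>w. w dvd 1 \<and> a = b * w"
proof (cases "b = 0")
  case True thus ?thesis using assms by (intro exI[of _ 1]) auto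
next
  case False
  obtain x where x: "b = a * x" using assms(1) by (rule dvdE)
  obtain y where y: "a = b * y" using assms(2) by (rule dvdE)
  have "b * 1 = b * (y * x)" using x y by (simp add: mult.assoc)
  hence "y * x = 1" using False by (metis mult_left_cancel)
  hence "y dvd 1" by (metis dvdI)
  thus ?thesis using y by blast
qed

lemma fps_decomp: "F = fps_const (F $ 0) + fps_X * fps_shift 1 (F :: 'a::comm_ring_1 fps)"
  by (rule fps_ext) (auto simp: fps_X_mult_nth)

lemma shift_decomp: "fps_shift m F = fps_const (F $ m) + fps_X * fps_shift (Suc m) (F :: 'a::comm_ring_1 fps)"
  by (rule fps_ext) (auto simp: fps_X_mult_nth)

lemma aux0: "(a::'a::comm_ring_1) = b + c * d \<Longrightarrow> a - b - d * c = 0"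
  by (simp add: algebra_simps)

lemma aux1: "(x::'a::ab_group_add) = a - b - c \<Longrightarrow> a = b + c + x"
  by (simp add: algebra_simps)

lemma aux2: "(Km::'a::comm_ring_1) = c1 + c2 * F + X * K1 \<Longrightarrow> Am = c1' + X * A1 \<Longrightarrow> Sm = c2 + X * S1
   \<Longrightarrow> c1' = c1 \<Longrightarrow> Km - (Am + F * Sm) = X * (K1 - (A1 + F * S1))"
  by (simp add: algebra_simps)

context cset begin

lemma fm_nth [simp]: "fps_map \<iota> f $ n = \<iota> (f $ n)"
  by (simp add: fps_map_def)

lemma fm_mult: "fps_map \<iota> (g * h) = fps_map \<iota> g * fps_map \<iota> h"
  by (rule fps_ext) (simp add: fps_mult_nth iota_sum iota_mult)

lemma fm_inj: "inj \<iota> \<Longrightarrow> fps_map \<iota> a = fps_map \<iota> b \<Longrightarrow> a = b"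
  by (rule fps_ext) (metis fm_nth injD)

lemma notK_of_dist: "x * c - 1 \<in> K 1 \<Longrightarrow> x \<notin> K 1"
  using unitB unit_notK1 by blast

lemma qi_surj: assumes "quot_R_alg_iso \<iota> f0 \<psi>" shows "\<exists>r s. y = \<iota> r + \<iota> f0 * s"
proof -
  have bij: "bij_betw \<psi> (range (coset (principal f0))) (range (coset (principal (\<iota> f0))))"
    and c: "\<And>r. \<psi> (coset (principal f0) r) = coset (principal (\<iota> f0)) (\<iota> r)"
    using assms unfolding quot_R_alg_iso_def by blast+
  have "coset (principal (\<iota> f0)) y \<in> \<psi> ` range (coset (principal f0))"
    using bij unfolding bij_betw_def by auto
  then obtain a where "coset (principal (\<iota> f0)) y = coset (principal (\<iota> f0)) (\<iota> a)"
    using c by auto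
  hence "y - \<iota> a \<in> principal (\<iota> f0)" by (simp add: coset_eq principal_ideal)
  then obtain s where "y - \<iota> a = \<iota> f0 * s" unfolding principal_def by auto
  hence "y = \<iota> a + \<iota> f0 * s" by (simp add: algebra_simps)
  thus ?thesis by blast
qed

lemma qi_inj: assumes "quot_R_alg_iso \<iota> f0 \<psi>" "\<iota> c = \<iota> f0 * s" shows "f0 dvd c"
proof -
  have bij: "bij_betw \<psi> (range (coset (principal f0))) (range (coset (principal (\<iota> f0))))"
    and cc: "\<And>r. \<psi> (coset (principal f0) r) = coset (principal (\<iota> f0)) (\<iota> r)"
    using assms unfolding quot_R_alg_iso_def by blast+
  have "\<iota> c - \<iota> 0 \<in> principal (\<iota> f0)" using assms(2) by (auto simp: principal_def)
  hence "coset (principal (\<iota> f0)) (\<iota> c) = coset (principal (\<iota> f0)) (\<iota> 0)"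
    by (simp add: coset_eq principal_ideal)
  hence "\<psi> (coset (principal f0) c) = \<psi> (coset (principal f0) 0)" using cc by simp
  hence "coset (principal f0) c = coset (principal f0) 0"
    using bij unfolding bij_betw_def inj_on_def by blast
  hence "c \<in> principal f0" by (simp add: coset_eq principal_ideal)
  thus ?thesis unfolding principal_def by auto
qed

lemma qi_desc: assumes q: "quot_R_alg_iso \<iota> f0 \<psi>" and e: "e dvd f0" and c: "\<iota> c = \<iota> e * w"
  shows "e dvd c"
proof -
  obtain r s where w: "w = \<iota> r + \<iota> f0 * s" using qi_surj[OF q] by blast
  have "\<iota> (c - e * r) = \<iota> f0 * (\<iota> e * s)"
    using c w by (simp add: iota_diff iota_mult algebra_simps)
  hence "f0 dvd c - e * r" by (rule qi_inj[OF q])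
  hence "e dvd c - e * r" using e dvd_trans by blast
  moreover have "e dvd e * r" by simp
  ultimately have "e dvd (c - e * r) + e * r" by (rule dvd_add)
  thus ?thesis by simp
qed

lemma qi_unit: assumes q: "quot_R_alg_iso \<iota> f0 \<psi>" and e: "e dvd f0" and u: "\<iota> e dvd 1"
  shows "e dvd 1"
proof -
  obtain w where "1 = \<iota> e * w" using u by (rule dvdE)
  hence "\<iota> 1 = \<iota> e * w" by simp
  thus ?thesis by (rule qi_desc[OF q e])
qed

lemma lift:
  assumes S: "\<And>y. \<exists>r s. y = \<iota> r + \<iota> (f $ 0) * s"
  shows "\<exists>k s. Kf = fps_map \<iota> k + fps_map \<iota> f * s"
proof -
  define F where "F = fps_map \<iota> f"
  have "\<forall>y. \<exists>r. \<exists>s. y = \<iota> r + \<iota> (f $ 0) * s" using S by blast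
  from choice[OF this] obtain R where "\<forall>y. \<exists>s. y = \<iota> (R y) + \<iota> (f $ 0) * s" by blast
  from choice[OF this] obtain Sf where RS': "\<forall>y. y = \<iota> (R y) + \<iota> (f $ 0) * Sf y" by blast
  hence RS: "\<And>y. y = \<iota> (R y) + \<iota> (f $ 0) * Sf y" by blast
  define nxt where "nxt X = fps_shift 1 (X - fps_const (\<iota> (R (X $ 0))) - fps_const (Sf (X $ 0)) * F)" for X
  define Ks where "Ks m = (nxt ^^ m) Kf" for m
  define k where "k = Abs_fps (\<lambda>m. R (Ks m $ 0))"
  define s where "s = Abs_fps (\<lambda>m. Sf (Ks m $ 0))"
  have Ks_dec: "Ks m = fps_const (\<iota> (k $ m)) + fps_const (s $ m) * F + fps_X * Ks (Suc m)" for m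
  proof -
    define Y where "Y = Ks m - fps_const (\<iota> (k $ m)) - fps_const (s $ m) * F"
    define z where "z = Ks m $ 0"
    have Y0: "Y $ 0 = z - \<iota> (R z) - Sf z * \<iota> (f $ 0)" by (simp add: Y_def k_def s_def F_def z_def)
    have "Y $ 0 = 0" unfolding Y0 using aux0[OF RS[of z]] .
    hence "Y = fps_X * fps_shift 1 Y" using fps_decomp[of Y] by simp
    moreover have "Ks (Suc m) = nxt (Ks m)" by (simp add: Ks_def)
    moreover have "nxt (Ks m) = fps_shift 1 Y" by (simp add: nxt_def Y_def k_def s_def)
    ultimately have "fps_X * Ks (Suc m) = Ks m - fps_const (\<iota> (k $ m)) - fps_const (s $ m) * F"
      unfolding Y_def by simp
    thus ?thesis by (rule aux1)
  qed
  define D where "D m = Ks m - (fps_shift m (fps_map \<iota> k) + F * fps_shift m s)" for m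
  have D_step: "D m = fps_X * D (Suc m)" for m
    unfolding D_def
    by (rule aux2[OF Ks_dec[of m] shift_decomp[of m "fps_map \<iota> k"] shift_decomp[of m s]]) simp
  have DN: "D 0 = fps_X ^ N * D N" for N
  proof (induct N)
    case 0 show ?case by simp
  next
    case (Suc N)
    have "D 0 = fps_X ^ N * (fps_X * D (Suc N))" using Suc D_step[of N] by simp
    thus ?case by (simp add: mult.assoc)
  qed
  have "D 0 $ n = 0" for n
    using fps_X_power_mult_nth[of "Suc n" "D (Suc n)" n] DN[of "Suc n"] by simp
  hence "D 0 = 0" by (intro fps_ext) simp
  hence "Kf = fps_map \<iota> k + F * s" by (simp add: D_def Ks_def)
  thus ?thesis unfolding F_def by blast
qed

end



context cset begin

lemma WPgen:
  assumes "\<forall>i<d. G $ i \<in> K 1" "G $ d * c' - 1 \<in> K 1"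
  shows "\<exists>U. U dvd 1 \<and> G = U * fps_of_poly (weierstrass_poly (K 1) G) \<and>
     wpoly (weierstrass_poly (K 1) G) \<and> degree (weierstrass_poly (K 1) G) = d"
proof -
  obtain U Q where UQ: "U dvd 1" "G = U * fps_of_poly Q" "lead_coeff Q = 1" "degree Q = d"
     "\<forall>i<d. coeff Q i \<in> K 1" using weier_exist[OF assms] by blast
  hence W: "wpoly Q" by (simp add: wpoly_def)
  have "weierstrass_poly (K 1) G = Q" by (rule WP_eq[OF UQ(1,2) W])
  thus ?thesis using UQ W by auto
qed

lemma wpoly_unit: assumes "wpoly Q" shows "Q dvd 1 \<longleftrightarrow> degree Q = 0"
proof
  assume "Q dvd 1"
  then obtain c where "Q = [:c:]" by (rule is_unit_polyE)
  thus "degree Q = 0" by simp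
next
  assume "degree Q = 0"
  then obtain a where a: "Q = [:a:]" by (rule degree_eq_zeroE)
  hence "a = 1" using assms by (simp add: wpoly_def)
  thus "Q dvd 1" using a by (simp add: one_pCons[symmetric])
qed

lemma wpoly_factor:
  assumes W: "wpoly (A * B)" and lA: "lead_coeff A = 1" and lB: "lead_coeff B = 1"
  shows "wpoly A"
proof -
  have A0: "A \<noteq> 0" and B0: "B \<noteq> 0" using lA lB by auto
  have exA: "\<exists>i. coeff A i \<notin> K 1" using lA one_notin by (intro exI[of _ "degree A"]) simp
  have exB: "\<exists>i. coeff B i \<notin> K 1" using lB one_notin by (intro exI[of _ "degree B"]) simp
  define i where "i = (LEAST i. coeff A i \<notin> K 1)"
  define j where "j = (LEAST j. coeff B j \<notin> K 1)"
  have Ai: "coeff A i \<notin> K 1" unfolding i_def using exA by (rule LeastI_ex)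
  have Bj: "coeff B j \<notin> K 1" unfolding j_def using exB by (rule LeastI_ex)
  have Alo: "\<forall>m<i. fps_of_poly A $ m \<in> K 1" unfolding i_def using not_less_Least by auto
  have Blo: "\<forall>m<j. fps_of_poly B $ m \<in> K 1" unfolding j_def using not_less_Least by auto
  have ile: "i \<le> degree A" unfolding i_def using lA one_notin by (intro Least_le) simp
  have jle: "j \<le> degree B" unfolding j_def using lB one_notin by (intro Least_le) simp
  have d: "(fps_of_poly A * fps_of_poly B) $ (i + j) - fps_of_poly A $ i * fps_of_poly B $ j \<in> K 1"
    by (rule least_prod(2)[OF Alo Blo])
  have AB: "coeff A i * coeff B j \<notin> K 1" using Ai Bj K1_prime by blast
  have "coeff (A * B) (i + j) \<notin> K 1"
  proof
    assume c: "coeff (A * B) (i + j) \<in> K 1"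
    have "coeff (A * B) (i + j) - (coeff (A * B) (i + j) - coeff A i * coeff B j) \<in> K 1"
      using c d by (rule_tac ideal_diff[OF K_ideal]) (auto simp: fps_of_poly_mult[symmetric])
    thus False using AB by simp
  qed
  hence "i + j = degree (A * B)" using wpoly_coeff[OF W] by blast
  hence ideg: "i = degree A" using ile jle A0 B0 by (simp add: degree_mult_eq)
  have "\<forall>m<degree A. coeff A m \<in> K 1"
  proof (intro allI impI)
    fix m assume "m < degree A"
    hence "m < i" using ideg by simp
    thus "coeff A m \<in> K 1" using Alo by simp
  qed
  thus ?thesis using lA unfolding wpoly_def by simp
qed

lemma iota_unit: "a dvd 1 \<Longrightarrow> \<iota> a dvd 1"
  by (metis dvdE dvdI iota_1 iota_mult)

lemma fps_unit0: "(g :: 'c::comm_ring_1 fps) dvd 1 \<Longrightarrow> g $ 0 dvd 1"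
  using fps_unit_iff by blast

end

locale mctx = cset P \<iota> \<phi> for P :: "'a::idom set" and \<iota> :: "'a \<Rightarrow> 'b::idom" and \<phi> +
  fixes f :: "'a fps" and \<psi> and n c
  assumes inj: "inj \<iota>" and lo: "\<forall>i<n. fps_map \<iota> f $ i \<in> K 1"
    and un: "fps_map \<iota> f $ n * c - 1 \<in> K 1"
    and q: "quot_R_alg_iso \<iota> (f $ 0) \<psi>"
    and divs: "\<forall>d. d dvd \<iota> (f $ 0) \<longrightarrow> (\<exists>e. e dvd f $ 0 \<and> d dvd \<iota> e \<and> \<iota> e dvd d)"
begin

lemma Pf: "\<exists>U. U dvd 1 \<and> fps_map \<iota> f = U * fps_of_poly (weierstrass_poly (K 1) (fps_map \<iota> f)) \<and>
     wpoly (weierstrass_poly (K 1) (fps_map \<iota> f)) \<and> degree (weierstrass_poly (K 1) (fps_map \<iota> f)) = n"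
  by (rule WPgen[OF lo un])

lemma f_unit_iff: "f dvd 1 \<longleftrightarrow> n = 0"
proof
  assume "f dvd 1"
  hence "\<iota> (f $ 0) dvd 1" using fps_unit0 iota_unit by blast
  hence "\<iota> (f $ 0) \<notin> K 1" by (rule unit_notK1)
  thus "n = 0" using lo by (metis fm_nth neq0_conv)
next
  assume "n = 0"
  hence "\<iota> (f $ 0) dvd 1" using un unitB by simp
  hence "f $ 0 dvd 1" by (rule qi_unit[OF q dvd_refl])
  thus "f dvd 1" using fps_unit_iff by blast
qed

lemma Fn_notK: "fps_map \<iota> f $ n \<notin> K 1"
  by (rule notK_of_dist[OF un])

lemma f_nz: "f \<noteq> 0"
  using Fn_notK ideal_zero[OF K_ideal] by auto

lemma part1:
  assumes fgh: "f = g * h" and ng: "\<not> g dvd 1" and nh: "\<not> h dvd 1"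
  shows "distinguished (K 1) (fps_map \<iota> g) \<and>
          distinguished (K 1) (fps_map \<iota> h) \<and>
          weierstrass_poly (K 1) (fps_map \<iota> f) =
            weierstrass_poly (K 1) (fps_map \<iota> g) *
            weierstrass_poly (K 1) (fps_map \<iota> h) \<and>
          \<not> (weierstrass_poly (K 1) (fps_map \<iota> g)) dvd 1 \<and>
          \<not> (weierstrass_poly (K 1) (fps_map \<iota> h)) dvd 1"
proof -
  define G where "G = fps_map \<iota> g"
  define H where "H = fps_map \<iota> h"
  have FGH: "fps_map \<iota> f = G * H" by (simp add: fgh G_def H_def fm_mult)
  have exG: "\<exists>i. G $ i \<notin> K 1"
  proof (rule ccontr)
    assume "\<not> ?thesis"
    hence "G \<in> fK 1" by (auto simp: fK_def)
    hence "fps_map \<iota> f \<in> fK 1" using FGH fK_mult_right by simp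
    thus False using Fn_notK fK_D by blast
  qed
  have exH: "\<exists>i. H $ i \<notin> K 1"
  proof (rule ccontr)
    assume "\<not> ?thesis"
    hence "H \<in> fK 1" by (auto simp: fK_def)
    hence "fps_map \<iota> f \<in> fK 1" using FGH fK_mult_left by simp
    thus False using Fn_notK fK_D by blast
  qed
  define i where "i = (LEAST i. G $ i \<notin> K 1)"
  define j where "j = (LEAST j. H $ j \<notin> K 1)"
  have Gi: "G $ i \<notin> K 1" unfolding i_def using exG by (rule LeastI_ex)
  have Hj: "H $ j \<notin> K 1" unfolding j_def using exH by (rule LeastI_ex)
  have Glo: "\<forall>m<i. G $ m \<in> K 1" unfolding i_def using not_less_Least by blast
  have Hlo: "\<forall>m<j. H $ m \<in> K 1" unfolding j_def using not_less_Least by blast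
  note lp = least_prod[OF Glo Hlo]
  have GH: "G $ i * H $ j \<notin> K 1" using Gi Hj K1_prime by blast
  have Fij: "fps_map \<iota> f $ (i + j) \<notin> K 1"
  proof
    assume "fps_map \<iota> f $ (i + j) \<in> K 1"
    hence "fps_map \<iota> f $ (i + j) - (fps_map \<iota> f $ (i + j) - G $ i * H $ j) \<in> K 1"
      using lp(2) FGH \<open>fps_map \<iota> f $ (i + j) \<in> K 1\<close> by (rule_tac ideal_diff[OF K_ideal]) auto
    moreover have "fps_map \<iota> f $ (i + j) - (fps_map \<iota> f $ (i + j) - G $ i * H $ j) = G $ i * H $ j"
      by simp
    ultimately show False using GH by simp
  qed
  have nij: "n = i + j"
  proof (rule ccontr)
    assume "n \<noteq> i + j"
    hence "n < i + j \<or> i + j < n" by auto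
    thus False
    proof
      assume "n < i + j" thus False using lp(1) FGH Fn_notK by auto
    next
      assume "i + j < n" thus False using lo Fij by auto
    qed
  qed
  have d0: "G $ i * H $ j - fps_map \<iota> f $ n \<in> K 1"
    using ideal_neg[OF K_ideal lp(2)] FGH nij by (simp add: minus_diff_eq)
  have cG: "G $ i * (H $ j * c) - 1 \<in> K 1"
  proof -
    have "G $ i * (H $ j * c) - 1 = (G $ i * H $ j - fps_map \<iota> f $ n) * c + (fps_map \<iota> f $ n * c - 1)"
      by (simp add: algebra_simps)
    moreover have "(G $ i * H $ j - fps_map \<iota> f $ n) * c + (fps_map \<iota> f $ n * c - 1) \<in> K 1"
      using ideal_mult2[OF K_ideal d0] un by (rule ideal_add[OF K_ideal])
    ultimately show ?thesis by (simp only: add_diff_eq)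
  qed
  have cH: "H $ j * (G $ i * c) - 1 \<in> K 1" using cG by (simp add: ac_simps)
  obtain Ug where Ug: "Ug dvd 1" "G = Ug * fps_of_poly (weierstrass_poly (K 1) G)"
    "wpoly (weierstrass_poly (K 1) G)" "degree (weierstrass_poly (K 1) G) = i"
    using WPgen[OF Glo cG] by blast
  obtain Uh where Uh: "Uh dvd 1" "H = Uh * fps_of_poly (weierstrass_poly (K 1) H)"
    "wpoly (weierstrass_poly (K 1) H)" "degree (weierstrass_poly (K 1) H) = j"
    using WPgen[OF Hlo cH] by blast
  define Qg where "Qg = weierstrass_poly (K 1) G"
  define Qh where "Qh = weierstrass_poly (K 1) H"
  have lc: "lead_coeff (Qg * Qh) = 1" using Ug Uh by (simp add: Qg_def Qh_def wpoly_def lead_coeff_mult)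
  have "Qg \<noteq> 0" "Qh \<noteq> 0" using Ug Uh by (auto simp: Qg_def Qh_def wpoly_def)
  hence dgh: "degree (Qg * Qh) = i + j" using Ug Uh by (simp add: degree_mult_eq Qg_def Qh_def)
  have "\<forall>m<i. fps_of_poly Qg $ m \<in> K 1" using Ug by (auto simp: Qg_def wpoly_def)
  moreover have "\<forall>m<j. fps_of_poly Qh $ m \<in> K 1" using Uh by (auto simp: Qh_def wpoly_def)
  ultimately have "\<forall>m<i+j. (fps_of_poly Qg * fps_of_poly Qh) $ m \<in> K 1" by (rule least_prod(1))
  hence "\<forall>m<i+j. coeff (Qg * Qh) m \<in> K 1" by (simp add: fps_of_poly_mult[symmetric])
  hence W: "wpoly (Qg * Qh)" using lc dgh by (simp add: wpoly_def)
  have eG: "G = Ug * fps_of_poly Qg" using Ug(2) by (simp add: Qg_def)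
  have eH: "H = Uh * fps_of_poly Qh" using Uh(2) by (simp add: Qh_def)
  have "fps_map \<iota> f = (Ug * Uh) * fps_of_poly (Qg * Qh)"
    unfolding FGH by (subst eG, subst eH) (simp add: fps_of_poly_mult ac_simps)
  hence Peq: "weierstrass_poly (K 1) (fps_map \<iota> f) = Qg * Qh"
    using WP_eq[OF _ _ W] Ug(1) Uh(1) mult_dvd_mono[of Ug 1 Uh 1] by simp
  have i0: "i \<noteq> 0"
  proof
    assume "i = 0"
    hence "\<iota> (g $ 0) dvd 1" using unitB[OF cG] by (simp add: G_def)
    moreover have "g $ 0 dvd f $ 0" by (simp add: fgh)
    ultimately have "g $ 0 dvd 1" using qi_unit[OF q] by blast
    thus False using ng fps_unit_iff by blast
  qed
  have j0: "j \<noteq> 0"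
  proof
    assume "j = 0"
    hence "\<iota> (h $ 0) dvd 1" using unitB[OF cH] by (simp add: H_def)
    moreover have "h $ 0 dvd f $ 0" by (simp add: fgh)
    ultimately have "h $ 0 dvd 1" using qi_unit[OF q] by blast
    thus False using nh fps_unit_iff by blast
  qed
  have "distinguished (K 1) G" unfolding distinguished_def distinguished_of_order_def
    using Glo cG by blast
  moreover have "distinguished (K 1) H" unfolding distinguished_def distinguished_of_order_def
    using Hlo cH by blast
  moreover have "\<not> Qg dvd 1" using wpoly_unit Ug i0 by (simp add: Qg_def)
  moreover have "\<not> Qh dvd 1" using wpoly_unit Uh j0 by (simp add: Qh_def)
  ultimately show ?thesis using Peq by (simp add: G_def H_def Qg_def Qh_def)
qed

lemma part2:
  assumes PGH: "weierstrass_poly (K 1) (fps_map \<iota> f) = Gp * Hp"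
    and nG: "\<not> Gp dvd 1" and nH: "\<not> Hp dvd 1"
  shows "\<exists>g h. f = g * h \<and> \<not> g dvd 1 \<and> \<not> h dvd 1 \<and>
             (\<exists>!u. u dvd 1 \<and> (\<exists>v. u * v = 1 \<and>
                 Gp = smult u (weierstrass_poly (K 1) (fps_map \<iota> g)) \<and>
                 Hp = smult v (weierstrass_poly (K 1) (fps_map \<iota> h))))"
proof -
  define F where "F = fps_map \<iota> f"
  define Pw where "Pw = weierstrass_poly (K 1) F"
  obtain Uf where Uf: "Uf dvd 1" "F = Uf * fps_of_poly Pw" "wpoly Pw" "degree Pw = n"
    using Pf unfolding F_def Pw_def by blast
  have PGH': "Pw = Gp * Hp" using PGH by (simp add: Pw_def F_def)
  define u where "u = lead_coeff Gp"
  define v where "v = lead_coeff Hp"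
  have uv: "u * v = 1" using Uf(3) PGH' by (simp add: u_def v_def wpoly_def lead_coeff_mult)
  have u0: "u \<noteq> 0" and v0: "v \<noteq> 0" using uv by auto
  have uu: "u dvd 1" using uv by (metis dvdI)
  have vu: "v dvd 1" using uv by (metis dvdI mult.commute)
  define G' where "G' = smult v Gp"
  define H' where "H' = smult u Hp"
  have GH': "G' * H' = Pw" using PGH' uv by (simp add: G'_def H'_def mult.commute)
  have lG: "lead_coeff G' = 1" using uv v0 by (simp add: G'_def u_def mult.commute)
  have lH: "lead_coeff H' = 1" using uv u0 by (simp add: H'_def v_def)
  have WG: "wpoly G'" using wpoly_factor[of G' H'] GH' Uf(3) lG lH by simp
  have WH: "wpoly H'" using wpoly_factor[of H' G'] GH' Uf(3) lG lH by (simp add: mult.commute)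
  have degG: "degree G' = degree Gp" using v0 by (simp add: G'_def)
  have degH: "degree H' = degree Hp" using u0 by (simp add: H'_def)
  have dG0: "degree Gp \<noteq> 0"
  proof
    assume "degree Gp = 0"
    then obtain a where "Gp = [:a:]" by (rule degree_eq_zeroE)
    hence "Gp = [:u:]" by (simp add: u_def)
    thus False using nG uu by (simp add: is_unit_const_poly_iff)
  qed
  have dH0: "degree Hp \<noteq> 0"
  proof
    assume "degree Hp = 0"
    then obtain a where "Hp = [:a:]" by (rule degree_eq_zeroE)
    hence "Hp = [:v:]" by (simp add: v_def)
    thus False using nH vu by (simp add: is_unit_const_poly_iff)
  qed
  define d0 where "d0 = coeff G' 0"
  have d0K: "d0 \<in> K 1" using WG dG0 degG by (simp add: d0_def wpoly_def)
  have hK: "coeff H' 0 \<in> K 1" using WH dH0 degH by (simp add: wpoly_def)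
  have "\<iota> (f $ 0) = Uf $ 0 * (d0 * coeff H' 0)"
  proof -
    have "\<iota> (f $ 0) = F $ 0" by (simp add: F_def)
    also have "\<dots> = Uf $ 0 * coeff Pw 0" using Uf(2) by simp
    also have "coeff Pw 0 = d0 * coeff H' 0" using GH'[symmetric] by (simp add: d0_def coeff_mult_0)
    finally show ?thesis .
  qed
  hence "d0 dvd \<iota> (f $ 0)" by (metis dvd_mult dvd_triv_left)
  then obtain e where e: "e dvd f $ 0" "d0 dvd \<iota> e" "\<iota> e dvd d0" using divs by blast
  obtain w where w: "w dvd 1" "d0 = \<iota> e * w" using assoc_unit[OF e(2,3)] by blast
  obtain winv where winv: "1 = w * winv" using w(1) by (rule dvdE)
  define Gf where "Gf = fps_of_poly G' * fps_const winv"
  have Gf0: "Gf $ 0 = \<iota> e" using w(2) winv by (simp add: Gf_def d0_def[symmetric] mult.assoc)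
  have S: "\<And>y. \<exists>r s. y = \<iota> r + \<iota> (f $ 0) * s" using qi_surj[OF q] by blast
  obtain k s where ks: "fps_shift 1 Gf = fps_map \<iota> k + F * s" using lift[OF S] unfolding F_def by blast
  define g where "g = fps_const e + fps_X * k"
  have fg: "fps_map \<iota> g = fps_const (\<iota> e) + fps_X * fps_map \<iota> k"
    by (rule fps_ext) (simp add: g_def fps_X_mult_nth)
  have "Gf = fps_const (\<iota> e) + fps_X * fps_shift 1 Gf" using fps_decomp[of Gf] Gf0 by simp
  hence fg2: "fps_map \<iota> g = Gf - fps_X * F * s" unfolding fg ks by (simp add: algebra_simps)
  have GfW: "fps_of_poly G' = Gf * fps_const w"
    using winv by (simp add: Gf_def mult.assoc fps_const_mult[symmetric] mult.commute)
  define Vg where "Vg = 1 - fps_X * Uf * fps_const w * fps_of_poly H' * s"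
  have FG: "F = Uf * fps_of_poly G' * fps_of_poly H'"
    using Uf(2) GH' by (simp add: fps_of_poly_mult[symmetric] mult.assoc)
  have fgV: "fps_map \<iota> g = Gf * Vg"
    unfolding fg2 FG GfW Vg_def by (simp add: algebra_simps)
  have Vg1: "Vg dvd 1" using fps_unit_iff[of Vg] by (simp add: Vg_def)
  define Mg where "Mg = fps_const winv * Vg"
  have "winv dvd 1" using dvd_triv_right[of winv w] winv by simp
  hence cw: "fps_const winv dvd 1" using fps_unit_iff[of "fps_const winv"] by simp
  have Mg1: "Mg dvd 1" unfolding Mg_def using mult_dvd_mono[OF cw Vg1] by simp
  have fgM: "fps_map \<iota> g = Mg * fps_of_poly G'" using fgV by (simp add: Gf_def Mg_def ac_simps)
  have Pg: "weierstrass_poly (K 1) (fps_map \<iota> g) = G'" by (rule WP_eq[OF Mg1 fgM WG])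
  obtain Mi where Mi: "1 = Mg * Mi" using Mg1 by (rule dvdE)
  define Qh where "Qh = Uf * fps_of_poly H' * Mi"
  have gQ: "fps_map \<iota> g * Qh = F"
  proof -
    have "fps_map \<iota> g * Qh = (Mg * Mi) * (Uf * fps_of_poly G' * fps_of_poly H')"
      by (simp add: fgM Qh_def ac_simps)
    thus ?thesis using Mi FG by simp
  qed
  have g0: "g $ 0 = e" by (simp add: g_def)
  have desc: "Qh $ m \<in> range \<iota>" for m
  proof (cases "f $ 0 = 0")
    case True
    obtain r s where "Qh $ m = \<iota> r + \<iota> (f $ 0) * s" using S by blast
    thus ?thesis using True by simp
  next
    case False
    hence e0: "e \<noteq> 0" using e(1) by auto
    hence ie0: "\<iota> e \<noteq> 0" using inj by (metis iota_0 injD)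
    show ?thesis
    proof (induct m rule: less_induct)
      case (less m)
      define qq where "qq j = inv \<iota> (Qh $ j)" for j
      have qq: "\<iota> (qq j) = Qh $ j" if "j < m" for j
        using less[OF that] by (simp add: qq_def f_inv_into_f)
      define c' where "c' = (\<Sum>a = Suc 0..m. g $ a * qq (m - a))"
      have "\<iota> (f $ m) = (fps_map \<iota> g * Qh) $ m" using gQ by (simp add: F_def)
      also have "\<dots> = (\<Sum>a = 0..m. \<iota> (g $ a) * Qh $ (m - a))" by (simp add: fps_mult_nth)
      also have "\<dots> = \<iota> e * Qh $ m + (\<Sum>a = Suc 0..m. \<iota> (g $ a) * Qh $ (m - a))"
        by (simp add: sum.atLeast_Suc_atMost g0)
      also have "(\<Sum>a = Suc 0..m. \<iota> (g $ a) * Qh $ (m - a)) = (\<Sum>a = Suc 0..m. \<iota> (g $ a * qq (m - a)))"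
        by (intro sum.cong refl) (simp add: iota_mult qq)
      also have "\<dots> = \<iota> c'" by (simp add: c'_def iota_sum)
      finally have "\<iota> (f $ m - c') = \<iota> e * Qh $ m" by (simp add: iota_diff)
      hence "e dvd f $ m - c'" by (rule qi_desc[OF q e(1)])
      then obtain t where t: "f $ m - c' = e * t" by (rule dvdE)
      have "\<iota> e * \<iota> t = \<iota> e * Qh $ m"
        using \<open>\<iota> (f $ m - c') = \<iota> e * Qh $ m\<close> t by (simp add: iota_mult)
      hence "Qh $ m = \<iota> t" using ie0 by simp
      thus ?case by simp
    qed
  qed
  define h where "h = Abs_fps (\<lambda>m. inv \<iota> (Qh $ m))"
  have fh: "fps_map \<iota> h = Qh" by (rule fps_ext) (simp add: h_def f_inv_into_f[OF desc])
  have fgh: "f = g * h"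
    by (rule fm_inj[OF inj]) (simp add: fm_mult fh gQ F_def)
  have QhU: "Qh = (Uf * Mi) * fps_of_poly H'" by (simp add: Qh_def ac_simps)
  have "Mi dvd 1" using dvd_triv_right[of Mi Mg] Mi by simp
  hence UMi: "Uf * Mi dvd 1" using mult_dvd_mono[OF Uf(1), of Mi 1] by simp
  have Ph: "weierstrass_poly (K 1) (fps_map \<iota> h) = H'" unfolding fh by (rule WP_eq[OF UMi QhU WH])
  have ng: "\<not> g dvd 1"
  proof
    assume "g dvd 1"
    hence "\<iota> e dvd 1" using fps_unit0[of g] g0 iota_unit by simp
    moreover have "\<iota> e \<in> K 1"
    proof -
      have "\<iota> e = d0 * winv" using w(2) winv by (simp add: mult.assoc)
      thus ?thesis using ideal_mult2[OF K_ideal d0K] by simp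
    qed
    ultimately show False using unit_notK1 by blast
  qed
  have nh: "\<not> h dvd 1"
  proof
    assume "h dvd 1"
    hence "\<iota> (h $ 0) dvd 1" using fps_unit0[of h] iota_unit by simp
    moreover have "\<iota> (h $ 0) = Uf $ 0 * coeff H' 0 * Mi $ 0"
      using fm_nth[of h 0] unfolding fh by (simp add: Qh_def)
    moreover have "Uf $ 0 * coeff H' 0 * Mi $ 0 \<in> K 1"
      using hK by (simp add: ideal_mult[OF K_ideal] ideal_mult2[OF K_ideal])
    ultimately show False using unit_notK1 by metis
  qed
  have Gpu: "Gp = smult u G'" using uv by (simp add: G'_def mult.commute)
  have Hpv: "Hp = smult v H'" using uv by (simp add: H'_def mult.commute)
  have "\<exists>!u. u dvd 1 \<and> (\<exists>v. u * v = 1 \<and>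
                 Gp = smult u (weierstrass_poly (K 1) (fps_map \<iota> g)) \<and>
                 Hp = smult v (weierstrass_poly (K 1) (fps_map \<iota> h)))"
  proof (rule ex1I[of _ u])
    show "u dvd 1 \<and> (\<exists>v. u * v = 1 \<and> Gp = smult u (weierstrass_poly (K 1) (fps_map \<iota> g)) \<and>
                 Hp = smult v (weierstrass_poly (K 1) (fps_map \<iota> h)))"
      using uu uv Gpu Hpv Pg Ph by blast
    fix u' assume "u' dvd 1 \<and> (\<exists>v. u' * v = 1 \<and> Gp = smult u' (weierstrass_poly (K 1) (fps_map \<iota> g)) \<and>
                 Hp = smult v (weierstrass_poly (K 1) (fps_map \<iota> h)))"
    hence "Gp = smult u' G'" using Pg by blast
    hence "lead_coeff Gp = u'" using lG by simp
    thus "u' = u" by (simp add: u_def)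
  qed
  thus ?thesis using fgh ng nh by blast
qed

lemma irr:
  "irreducible f \<longleftrightarrow> irreducible (weierstrass_poly (K 1) (fps_map \<iota> f))"
proof -
  obtain Uf where Uf: "Uf dvd 1" "fps_map \<iota> f = Uf * fps_of_poly (weierstrass_poly (K 1) (fps_map \<iota> f))"
    "wpoly (weierstrass_poly (K 1) (fps_map \<iota> f))"
    "degree (weierstrass_poly (K 1) (fps_map \<iota> f)) = n" using Pf by (elim exE conjE) (rule that, assumption+)
  define Pw where "Pw = weierstrass_poly (K 1) (fps_map \<iota> f)"
  have Pw_unit: "Pw dvd 1 \<longleftrightarrow> n = 0" using wpoly_unit[OF Uf(3)] Uf(4) by (simp add: Pw_def)
  have Pw0: "Pw \<noteq> 0" using Uf(3) by (auto simp: Pw_def wpoly_def)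
  show ?thesis unfolding Pw_def[symmetric]
  proof
    assume I: "irreducible f"
    show "irreducible Pw"
    proof (rule irreducibleI)
      show "Pw \<noteq> 0" by (rule Pw0)
      have "\<not> f dvd 1" using I by (rule irreducible_not_unit)
      thus "\<not> Pw dvd 1" using Pw_unit f_unit_iff by simp
      fix a b assume ab: "Pw = a * b"
      show "a dvd 1 \<or> b dvd 1"
      proof (rule ccontr)
        assume "\<not> (a dvd 1 \<or> b dvd 1)"
        hence na: "\<not> a dvd 1" and nb: "\<not> b dvd 1" by auto
        have ab': "weierstrass_poly (K 1) (fps_map \<iota> f) = a * b" using ab by (simp add: Pw_def)
        obtain g h where gh: "f = g * h" "\<not> g dvd 1" "\<not> h dvd 1"
          using part2[OF ab' na nb] by (elim exE conjE) (rule that, assumption+)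
        have "g dvd 1 \<or> h dvd 1" using I gh(1) by (rule irreducibleD)
        thus False using gh by simp
      qed
    qed
  next
    assume I: "irreducible Pw"
    show "irreducible f"
    proof (rule irreducibleI)
      show "f \<noteq> 0" by (rule f_nz)
      have "\<not> Pw dvd 1" using I by (rule irreducible_not_unit)
      thus "\<not> f dvd 1" using Pw_unit f_unit_iff by simp
      fix a b assume ab: "f = a * b"
      show "a dvd 1 \<or> b dvd 1"
      proof (rule ccontr)
        assume "\<not> (a dvd 1 \<or> b dvd 1)"
        hence na: "\<not> a dvd 1" and nb: "\<not> b dvd 1" by auto
        note p = part1[OF ab na nb]
        have e: "Pw = weierstrass_poly (K 1) (fps_map \<iota> a) * weierstrass_poly (K 1) (fps_map \<iota> b)"
          unfolding Pw_def by (rule conjunct1[OF conjunct2[OF conjunct2[OF p]]])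
        have n1: "\<not> weierstrass_poly (K 1) (fps_map \<iota> a) dvd 1"
          by (rule conjunct1[OF conjunct2[OF conjunct2[OF conjunct2[OF p]]]])
        have n2: "\<not> weierstrass_poly (K 1) (fps_map \<iota> b) dvd 1"
          by (rule conjunct2[OF conjunct2[OF conjunct2[OF conjunct2[OF p]]]])
        have "weierstrass_poly (K 1) (fps_map \<iota> a) dvd 1 \<or> weierstrass_poly (K 1) (fps_map \<iota> b) dvd 1"
          using I e by (rule irreducibleD)
        thus False using n1 n2 by blast
      qed
    qed
  qed
qed

end

theorem theorem7p1:
  fixes P :: "'a::idom set"
    and \<iota> :: "'a \<Rightarrow> 'b::idom"
    and \<phi> :: "'b \<Rightarrow> nat \<Rightarrow> 'a set"
    and f :: "'a fps"
  assumes prime: "is_prime_ideal P"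
    and compl: "is_padic_completion P \<iota> \<phi>"
    and contains: "inj \<iota>"
    and dist: "distinguished (padic_closure \<phi> (\<iota> ` P)) (fps_map \<iota> f)"
    and quot_iso: "\<exists>\<psi>. quot_R_alg_iso \<iota> (fps_nth f 0) \<psi>"
    and divisors: "\<forall>d. d dvd \<iota> (fps_nth f 0) \<longrightarrow>
                      (\<exists>e. e dvd fps_nth f 0 \<and> d dvd \<iota> e \<and> \<iota> e dvd d)"
  shows "(irreducible f \<longleftrightarrow>
            irreducible (weierstrass_poly (padic_closure \<phi> (\<iota> ` P)) (fps_map \<iota> f)))
    \<and> (\<forall>g h. f = g * h \<and> \<not> g dvd 1 \<and> \<not> h dvd 1 \<longrightarrow>
          distinguished (padic_closure \<phi> (\<iota> ` P)) (fps_map \<iota> g) \<and>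
          distinguished (padic_closure \<phi> (\<iota> ` P)) (fps_map \<iota> h) \<and>
          weierstrass_poly (padic_closure \<phi> (\<iota> ` P)) (fps_map \<iota> f) =
            weierstrass_poly (padic_closure \<phi> (\<iota> ` P)) (fps_map \<iota> g) *
            weierstrass_poly (padic_closure \<phi> (\<iota> ` P)) (fps_map \<iota> h) \<and>
          \<not> (weierstrass_poly (padic_closure \<phi> (\<iota> ` P)) (fps_map \<iota> g)) dvd 1 \<and>
          \<not> (weierstrass_poly (padic_closure \<phi> (\<iota> ` P)) (fps_map \<iota> h)) dvd 1)
    \<and> (\<forall>G H. weierstrass_poly (padic_closure \<phi> (\<iota> ` P)) (fps_map \<iota> f) = G * H
              \<and> \<not> G dvd 1 \<and> \<not> H dvd 1 \<longrightarrow>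
          (\<exists>g h. f = g * h \<and> \<not> g dvd 1 \<and> \<not> h dvd 1 \<and>
             (\<exists>!u. u dvd 1 \<and> (\<exists>v. u * v = 1 \<and>
                 G = smult u (weierstrass_poly (padic_closure \<phi> (\<iota> ` P)) (fps_map \<iota> g)) \<and>
                 H = smult v (weierstrass_poly (padic_closure \<phi> (\<iota> ` P)) (fps_map \<iota> h))))))"
proof -
  interpret cset P \<iota> \<phi> using prime compl by unfold_locales
  have B: "padic_closure \<phi> (\<iota> ` P) = K 1" by (rule closure_K1)
  obtain \<psi> where q: "quot_R_alg_iso \<iota> (f $ 0) \<psi>" using quot_iso by blast
  obtain n where "distinguished_of_order (K 1) n (fps_map \<iota> f)"
    using dist unfolding B distinguished_def by blast
  then obtain c where lo: "\<forall>i<n. fps_map \<iota> f $ i \<in> K 1" and un: "fps_map \<iota> f $ n * c - 1 \<in> K 1"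
    unfolding distinguished_of_order_def by blast
  interpret mctx P \<iota> \<phi> f \<psi> n c
    using contains lo un q divisors by unfold_locales auto
  have p1: "\<forall>g h. f = g * h \<and> \<not> g dvd 1 \<and> \<not> h dvd 1 \<longrightarrow>
          distinguished (K 1) (fps_map \<iota> g) \<and>
          distinguished (K 1) (fps_map \<iota> h) \<and>
          weierstrass_poly (K 1) (fps_map \<iota> f) =
            weierstrass_poly (K 1) (fps_map \<iota> g) *
            weierstrass_poly (K 1) (fps_map \<iota> h) \<and>
          \<not> (weierstrass_poly (K 1) (fps_map \<iota> g)) dvd 1 \<and>
          \<not> (weierstrass_poly (K 1) (fps_map \<iota> h)) dvd 1"
    by (intro allI impI, elim conjE) (rule part1)
  have p2: "\<forall>G H. weierstrass_poly (K 1) (fps_map \<iota> f) = G * H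
              \<and> \<not> G dvd 1 \<and> \<not> H dvd 1 \<longrightarrow>
          (\<exists>g h. f = g * h \<and> \<not> g dvd 1 \<and> \<not> h dvd 1 \<and>
             (\<exists>!u. u dvd 1 \<and> (\<exists>v. u * v = 1 \<and>
                 G = smult u (weierstrass_poly (K 1) (fps_map \<iota> g)) \<and>
                 H = smult v (weierstrass_poly (K 1) (fps_map \<iota> h)))))"
    by (intro allI impI, elim conjE) (rule part2)
  show ?thesis unfolding B using irr p1 p2 by (rule conjI[OF _ conjI])
qed



end
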